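(* Let $\widetilde{\mathcal{A}}^+,\widetilde{\mathcal{A}}^-\subseteq\mathbb{R}^d$ be compact and linearly separable, with $$\tilde d:=\max_{\|y\|_*\le1,\ b\in\mathbb{R}} h(y,b;\widetilde{\mathcal{A}}^+,\widetilde{\mathcal{A}}^-)>0,$$ and let $(\tilde y,\tilde b)$ be an optimal solution. Then there exist $\tilde x^+\in\operatorname{conv}(\widetilde{\mathcal{A}}^+)$ and $\tilde x^-\in\operatorname{conv}(\widetilde{\mathcal{A}}^-)$ such that $\tilde y^\top(\tilde x^+-\tilde x^-)=\|\tilde x^+-\tilde x^-\|\,\|\tilde y\|_*$ and $\tilde d\,\|\tilde y\|_*=\tilde y^\top\tilde x^++\tilde b=-\tilde y^\top\tilde x^--\tilde b$; consequently $\tilde d=\|\tilde x^+-\tilde x^-\|/2$ and $\tilde b=-\tilde y^\top(\tilde x^++\tilde x^-)/2$. Furthermore, suppose the norm $\|\cdot\|$ and its dual are strictly convex. If $(\bar y,\bar b)$ satisfies $h(\bar y,\bar b;\widetilde{\mathcal{A}}^+,\widetilde{\mathcal{A}}^-)\ge\bar d>0$, then $\bar y^\top v(\tilde y)\ge \bar d/\tilde d>0$.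
   Context: $\|\cdot\|$ is a norm on $\mathbb{R}^d$ with dual norm $\|y\|_*=\max_{\|w\|\le1}y^\top w$. For $y\ne0$, $v(y)$ denotes a maximizer of $y^\top w$ over $\|w\|\le1$ (unique when $\|\cdot\|$ is strictly convex). Strict convexity of a norm $N$: $N(\beta w+(1-\beta)z)<\beta N(w)+(1-\beta)N(z)$ whenever $\beta\in(0,1)$ and $w,z$ are not collinear. Margin function: $h(y,b;\widetilde{\mathcal{A}}^+,\widetilde{\mathcal{A}}^-)=\min\{\min_{x\in\widetilde{\mathcal{A}}^+}(y^\top x+b),\ \min_{x\in\widetilde{\mathcal{A}}^-}(-y^\top x-b)\}$. *)

theory Defs
  imports "HOL-Analysis.Analysis"
begin

definition is_norm :: "('a::real_vector \<Rightarrow> real) \<Rightarrow> bool" where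
  "is_norm N \<longleftrightarrow>
     (\<forall>x. N x = 0 \<longleftrightarrow> x = 0) \<and>
     (\<forall>c x. N (c *\<^sub>R x) = \<bar>c\<bar> * N x) \<and>
     (\<forall>x y. N (x + y) \<le> N x + N y)"

definition dual_norm :: "('a::real_inner \<Rightarrow> real) \<Rightarrow> 'a \<Rightarrow> real" where
  "dual_norm N y = Sup ((\<lambda>w. y \<bullet> w) ` {w. N w \<le> 1})"

text \<open>v(y): a maximizer of y^T w over the unit ball of N (unique under strict convexity).\<close>
definition vmax :: "('a::real_inner \<Rightarrow> real) \<Rightarrow> 'a \<Rightarrow> 'a" where
  "vmax N y = (SOME w. N w \<le> 1 \<and> (\<forall>z. N z \<le> 1 \<longrightarrow> y \<bullet> z \<le> y \<bullet> w))"

definition strictly_convex_norm :: "('a::euclidean_space \<Rightarrow> real) \<Rightarrow> bool" where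
  "strictly_convex_norm N \<longleftrightarrow>
     (\<forall>\<beta> w z. 0 < \<beta> \<and> \<beta> < 1 \<and> \<not> collinear {0, w, z} \<longrightarrow>
        N (\<beta> *\<^sub>R w + (1 - \<beta>) *\<^sub>R z) < \<beta> * N w + (1 - \<beta>) * N z)"

definition margin :: "'a::real_inner \<Rightarrow> real \<Rightarrow> 'a set \<Rightarrow> 'a set \<Rightarrow> real" where
  "margin y b Ap Am =
     min (Inf ((\<lambda>x. y \<bullet> x + b) ` Ap)) (Inf ((\<lambda>x. - (y \<bullet> x) - b) ` Am))"

definition lin_separable :: "'a::real_inner set \<Rightarrow> 'a set \<Rightarrow> bool" where
  "lin_separable Ap Am \<longleftrightarrow>
     (\<exists>y b. (\<forall>x\<in>Ap. y \<bullet> x + b > 0) \<and> (\<forall>x\<in>Am. y \<bullet> x + b < 0))"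

end

theory Submission imports Defs begin

lemma nrm_basic:
  fixes N :: "'a::real_vector \<Rightarrow> real"
  assumes "is_norm N"
  shows "N 0 = 0" "N (-x) = N x" "N x \<ge> 0" "N (x+y) \<le> N x + N y" "N (c *\<^sub>R x) = \<bar>c\<bar> * N x"
    "N x = 0 \<longleftrightarrow> x = 0"
proof -
  have h: "\<And>c x. N (c *\<^sub>R x) = \<bar>c\<bar> * N x" and t: "\<And>x y. N (x + y) \<le> N x + N y"
    and z: "\<And>x. N x = 0 \<longleftrightarrow> x = 0"
    using assms unfolding is_norm_def by auto
  show "N 0 = 0" using z by simp
  show "N (-x) = N x" using h[of "-1" x] by simp
  show "N x \<ge> 0" using t[of x "-x"] h[of "-1" x] z[of 0] by simp
  show "N (x+y) \<le> N x + N y" by (rule t)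
  show "N (c *\<^sub>R x) = \<bar>c\<bar> * N x" by (rule h)
  show "N x = 0 \<longleftrightarrow> x = 0" by (rule z)
qed

lemma nrm_convex:
  fixes N :: "'a::real_vector \<Rightarrow> real"
  assumes "is_norm N" shows "convex_on UNIV N"
proof (rule convex_onI)
  fix t :: real and x y :: 'a assume "0 < t" "t < 1" "x \<in> UNIV" "y \<in> UNIV"
  have "N ((1 - t) *\<^sub>R x + t *\<^sub>R y) \<le> N ((1 - t) *\<^sub>R x) + N (t *\<^sub>R y)"
    using nrm_basic[OF assms] by blast
  also have "\<dots> = (1 - t) * N x + t * N y" using nrm_basic(5)[OF assms] \<open>0<t\<close> \<open>t<1\<close> by simp
  finally show "N ((1 - t) *\<^sub>R x + t *\<^sub>R y) \<le> (1 - t) * N x + t * N y" .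
qed (rule convex_UNIV)

lemma nrm_cont:
  fixes N :: "'a::euclidean_space \<Rightarrow> real"
  assumes "is_norm N" shows "continuous_on S N"
  using convex_on_continuous[OF open_UNIV nrm_convex[OF assms]] continuous_on_subset by blast

lemma nrm_lower:
  fixes N :: "'a::euclidean_space \<Rightarrow> real"
  assumes "is_norm N" shows "\<exists>c>0. \<forall>x. c * norm x \<le> N x"
proof -
  obtain b :: 'a where b: "b \<in> Basis" using nonempty_Basis by blast
  have ne: "sphere (0::'a) 1 \<noteq> {}" using b by (auto simp: norm_Basis)
  obtain x0 where x0: "x0 \<in> sphere 0 1" "\<And>y. y \<in> sphere 0 1 \<Longrightarrow> N x0 \<le> N y"
    using continuous_attains_inf[OF compact_sphere ne nrm_cont[OF assms]] by blast
  have "x0 \<noteq> 0" using x0 by auto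
  then have "N x0 \<noteq> 0" using nrm_basic(6)[OF assms] by blast
  then have c: "N x0 > 0" using nrm_basic(3)[OF assms] by (simp add: less_le)
  have "N x0 * norm x \<le> N x" for x
  proof (cases "x = 0")
    case True then show ?thesis using nrm_basic[OF assms] by simp
  next
    case False
    then have "(1/norm x) *\<^sub>R x \<in> sphere 0 1" by simp
    then have "N x0 \<le> N ((1/norm x) *\<^sub>R x)" by (rule x0)
    also have "\<dots> = N x / norm x" using nrm_basic(5)[OF assms] by simp
    finally show ?thesis using False by (simp add: field_simps)
  qed
  then show ?thesis using c by blast
qed

lemma dual_bdd:
  fixes N :: "'a::euclidean_space \<Rightarrow> real"
  assumes "is_norm N" shows "bdd_above ((\<lambda>w. y \<bullet> w) ` {w. N w \<le> 1})"
proof -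
  obtain c where c: "c > 0" "\<And>x. c * norm x \<le> N x" using nrm_lower[OF assms] by blast
  have "y \<bullet> w \<le> norm y / c" if "N w \<le> 1" for w
  proof -
    have "y \<bullet> w \<le> norm y * norm w" by (metis Cauchy_Schwarz_ineq2 abs_le_D1)
    moreover have "norm w \<le> 1 / c" using c(2)[of w] that c(1) by (simp add: field_simps)
    then have "norm y * norm w \<le> norm y * (1 / c)" by (intro mult_left_mono) auto
    ultimately show ?thesis by simp
  qed
  then show ?thesis by (intro bdd_aboveI2[where M="norm y / c"]) auto
qed

lemma dual_ineq:
  fixes N :: "'a::euclidean_space \<Rightarrow> real"
  assumes "is_norm N" shows "y \<bullet> w \<le> dual_norm N y * N w"
proof (cases "w = 0")
  case True then show ?thesis using nrm_basic(1)[OF assms] by simp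
next
  case False
  then have "N w \<noteq> 0" using nrm_basic(6)[OF assms] by blast
  then have p: "N w > 0" using nrm_basic(3)[OF assms] by (simp add: less_le)
  have "N ((1 / N w) *\<^sub>R w) \<le> 1" using p nrm_basic(5)[OF assms] by simp
  then have "y \<bullet> ((1 / N w) *\<^sub>R w) \<le> dual_norm N y"
    unfolding dual_norm_def by (intro cSup_upper dual_bdd[OF assms]) (use p in \<open>auto simp del: inner_scaleR_right\<close>)
  then show ?thesis using p by (simp add: field_simps)
qed

lemma dual_least:
  fixes N :: "'a::euclidean_space \<Rightarrow> real"
  assumes "\<And>w. N w \<le> 1 \<Longrightarrow> y \<bullet> w \<le> k" "is_norm N"
  shows "dual_norm N y \<le> k"
  unfolding dual_norm_def
proof (rule cSup_least)
  have "0 \<in> {w. N w \<le> 1}" using nrm_basic(1)[OF assms(2)] by simp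
  then show "(\<bullet>) y ` {w. N w \<le> 1} \<noteq> {}" by blast
qed (use assms in auto)


lemma cbdd:
  fixes f :: "'a::topological_space \<Rightarrow> real"
  assumes "compact A" "continuous_on A f"
  shows "bdd_below (f ` A)" "bdd_above (f ` A)"
  using compact_imp_bounded[OF compact_continuous_image[OF assms(2,1)]]
  by (auto intro: bounded_imp_bdd_below bounded_imp_bdd_above)

lemma margin_hull:
  fixes y :: "'a::euclidean_space"
  assumes "compact Ap" "compact Am" "margin y b Ap Am \<ge> d"
  shows "\<forall>x\<in>convex hull Ap. y \<bullet> x + b \<ge> d" "\<forall>x\<in>convex hull Am. - (y \<bullet> x) - b \<ge> d"
proof -
  have c1: "continuous_on Ap (\<lambda>x. y \<bullet> x + b)" by (intro continuous_intros)
  have c2: "continuous_on Am (\<lambda>x. - (y \<bullet> x) - b)" by (intro continuous_intros)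
  have "Ap \<subseteq> {x. y \<bullet> x \<ge> d - b}"
  proof
    fix x assume x: "x \<in> Ap"
    have "d \<le> Inf ((\<lambda>x. y \<bullet> x + b) ` Ap)" using assms(3) unfolding margin_def by simp
    also have "\<dots> \<le> y \<bullet> x + b" using x by (intro cInf_lower cbdd(1)[OF assms(1) c1]) auto
    finally show "x \<in> {x. y \<bullet> x \<ge> d - b}" by simp
  qed
  then have "convex hull Ap \<subseteq> {x. y \<bullet> x \<ge> d - b}" by (intro hull_minimal convex_halfspace_ge)
  then show "\<forall>x\<in>convex hull Ap. y \<bullet> x + b \<ge> d" by auto
  have "Am \<subseteq> {x. (-y) \<bullet> x \<ge> d + b}"
  proof
    fix x assume x: "x \<in> Am"
    have "d \<le> Inf ((\<lambda>x. - (y \<bullet> x) - b) ` Am)" using assms(3) unfolding margin_def by simp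
    also have "\<dots> \<le> - (y \<bullet> x) - b" using x by (intro cInf_lower cbdd(1)[OF assms(2) c2]) auto
    finally show "x \<in> {x. (-y) \<bullet> x \<ge> d + b}" by simp
  qed
  then have "convex hull Am \<subseteq> {x. (-y) \<bullet> x \<ge> d + b}" by (intro hull_minimal convex_halfspace_ge)
  then show "\<forall>x\<in>convex hull Am. - (y \<bullet> x) - b \<ge> d" by auto
qed

lemma nrm_ball_convex:
  fixes N :: "'a::real_vector \<Rightarrow> real"
  assumes "is_norm N" shows "convex {w. N w \<le> r}"
proof (rule convexI)
  fix x y :: 'a and u v :: real
  assume x': "x \<in> {w. N w \<le> r}" and y': "y \<in> {w. N w \<le> r}" and "0 \<le> u" "0 \<le> v" "u + v = 1"
  then have x: "N x \<le> r" and y: "N y \<le> r" and uv: "0 \<le> u \<and> 0 \<le> v \<and> u + v = 1" by auto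
  have "N (u *\<^sub>R x + v *\<^sub>R y) \<le> N (u *\<^sub>R x) + N (v *\<^sub>R y)" using nrm_basic(4)[OF assms] .
  also have "\<dots> = u * N x + v * N y" using nrm_basic(5)[OF assms] uv by simp
  also have "\<dots> \<le> u * r + v * r" using uv x y by (intro add_mono mult_left_mono) auto
  also have "\<dots> = r" using uv by (metis distrib_right mult_1_left)
  finally show "u *\<^sub>R x + v *\<^sub>R y \<in> {w. N w \<le> r}" by simp
qed


theorem mainTheorem5:
  fixes N :: "real^'d \<Rightarrow> real"
    and Ap Am :: "(real^'d) set"
    and yt :: "real^'d" and bt dt :: real
  assumes norm: "is_norm N"
    and nonempty: "Ap \<noteq> {}" "Am \<noteq> {}"
    and compact: "compact Ap" "compact Am"
    and sep: "lin_separable Ap Am"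
    and dt_pos: "dt > 0"
    and opt_feas: "dual_norm N yt \<le> 1"
    and opt_val: "margin yt bt Ap Am = dt"
    and opt_max: "\<And>y b. dual_norm N y \<le> 1 \<Longrightarrow> margin y b Ap Am \<le> dt"
  shows "(\<exists>xp \<in> convex hull Ap. \<exists>xm \<in> convex hull Am.
            yt \<bullet> (xp - xm) = N (xp - xm) * dual_norm N yt \<and>
            dt * dual_norm N yt = yt \<bullet> xp + bt \<and>
            dt * dual_norm N yt = - (yt \<bullet> xm) - bt \<and>
            dt = N (xp - xm) / 2 \<and>
            bt = - (yt \<bullet> (xp + xm)) / 2)
       \<and> (strictly_convex_norm N \<and> strictly_convex_norm (dual_norm N) \<longrightarrow>
            (\<forall>yb bb db. margin yb bb Ap Am \<ge> db \<and> db > 0 \<longrightarrow>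
                yb \<bullet> vmax N yt \<ge> db / dt \<and> db / dt > 0))"
proof -
  define D where "D = (\<Union>x\<in> convex hull Ap. \<Union>y \<in> convex hull Am. {x - y})"
  have Dc: "compact D" unfolding D_def
    by (intro compact_differences' compact_convex_hull compact)
  have Dcv: "convex D" unfolding D_def by (intro convex_differences convex_convex_hull)
  have Dne: "D \<noteq> {}" unfolding D_def using nonempty hull_subset by fastforce
  obtain z0 where z0: "z0 \<in> D" "\<And>z. z \<in> D \<Longrightarrow> N z0 \<le> N z"
    using continuous_attains_inf[OF Dc Dne nrm_cont[OF norm]] by blast
  obtain xp xm where xp: "xp \<in> convex hull Ap" and xm: "xm \<in> convex hull Am" and z0e: "z0 = xp - xm"
    using z0(1) unfolding D_def by blast
  define \<delta> where "\<delta> = N z0"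
  have key: "\<delta> \<le> 2 * dt"
  proof (cases "\<delta> \<le> 0")
    case True then show ?thesis using dt_pos by simp
  next
    case False
    show ?thesis
    proof (rule dense_le_bounded[of 0 \<delta>])
      show "0 < \<delta>" using False by simp
    next
      fix r assume r: "0 < r" "r < \<delta>"
      define K where "K = {w. N w \<le> r}"
      have Kcv: "convex K" unfolding K_def by (rule nrm_ball_convex[OF norm])
      have "0 \<in> K" unfolding K_def using nrm_basic(1)[OF norm] r by simp
      then have Kne: "K \<noteq> {}" by blast
      have disj: "K \<inter> D = {}"
      proof -
        have "N z > r" if "z \<in> D" for z using z0(2)[OF that] r unfolding \<delta>_def by simp
        then show ?thesis unfolding K_def by force
      qed
      obtain a c where a: "a \<noteq> 0" and ak: "\<And>x. x \<in> K \<Longrightarrow> a \<bullet> x \<le> c" and ad: "\<And>x. x \<in> D \<Longrightarrow> a \<bullet> x \<ge> c"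
        using separating_hyperplane_sets[OF Kcv Dcv Kne Dne disj] by blast
      define k where "k = dual_norm N a"
      have kc: "k \<le> c / r" unfolding k_def
      proof (rule dual_least[OF _ norm])
        fix w assume "N w \<le> 1"
        then have "N (r *\<^sub>R w) \<le> r" using nrm_basic(5)[OF norm] r
          by (simp add: mult_left_le)
        then have "a \<bullet> (r *\<^sub>R w) \<le> c" using ak unfolding K_def by blast
        then show "a \<bullet> w \<le> c / r" using r by (simp add: field_simps)
      qed
      have kpos: "k > 0"
      proof -
        have "0 < a \<bullet> a" using a by simp
        also have "\<dots> \<le> k * N a" unfolding k_def by (rule dual_ineq[OF norm])
        finally have kN: "0 < k * N a" .
        show ?thesis
        proof (rule ccontr)
          assume "\<not> k > 0"
          then have "k * N a \<le> 0" using nrm_basic(3)[OF norm] by (simp add: mult_nonpos_nonneg)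
          with kN show False by simp
        qed
      qed
      define y where "y = (1 / k) *\<^sub>R a"
      have yfeas: "dual_norm N y \<le> 1"
      proof (rule dual_least[OF _ norm])
        fix w assume w: "N w \<le> 1"
        have "a \<bullet> w \<le> k * N w" unfolding k_def by (rule dual_ineq[OF norm])
        also have "\<dots> \<le> k" using w kpos by (simp add: mult_left_le)
        finally show "y \<bullet> w \<le> 1" unfolding y_def using kpos by (simp add: field_simps)
      qed
      have yD: "y \<bullet> z \<ge> r" if "z \<in> D" for z
      proof -
        have "k * r \<le> c" using kc r by (simp add: pos_le_divide_eq)
        then have "r * k \<le> c" by (simp add: mult.commute)
        then have "r \<le> c / k" using kpos by (simp add: pos_le_divide_eq)
        also have "\<dots> \<le> a \<bullet> z / k" using ad[OF that] kpos by (simp add: divide_right_mono)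
        finally show ?thesis unfolding y_def by simp
      qed
      have pair: "y \<bullet> u - y \<bullet> v \<ge> r" if "u \<in> Ap" "v \<in> Am" for u v
      proof -
        have "u \<in> convex hull Ap" "v \<in> convex hull Am" using hull_inc[OF that(1)] hull_inc[OF that(2)] by auto
        then have "u - v \<in> D" unfolding D_def by (intro UN_I) auto
        from yD[OF this] show ?thesis by (simp add: inner_diff_right)
      qed
      have cy: "continuous_on A (\<lambda>x. y \<bullet> x)" for A by (intro continuous_intros)
      define p where "p = Inf ((\<lambda>x. y \<bullet> x) ` Ap)"
      define q where "q = Sup ((\<lambda>x. y \<bullet> x) ` Am)"
      have pl: "p \<le> y \<bullet> u" if "u \<in> Ap" for u
        unfolding p_def using that by (intro cInf_lower cbdd(1)[OF compact(1) cy]) auto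
      have qu: "y \<bullet> v \<le> q" if "v \<in> Am" for v
        unfolding q_def using that by (intro cSup_upper cbdd(2)[OF compact(2) cy]) auto
      have pq: "q \<le> p - r"
      proof -
        have "y \<bullet> v + r \<le> p" if "v \<in> Am" for v
          unfolding p_def
        proof (rule cInf_greatest)
          show "(\<lambda>x. y \<bullet> x) ` Ap \<noteq> {}" using nonempty(1) by simp
          fix t assume "t \<in> (\<lambda>x. y \<bullet> x) ` Ap"
          then obtain u where u: "u \<in> Ap" and tu: "t = y \<bullet> u" by blast
          show "y \<bullet> v + r \<le> t" using pair[OF u that] tu by linarith
        qed
        then show ?thesis unfolding q_def
        proof (intro cSup_least)
          show "(\<lambda>x. y \<bullet> x) ` Am \<noteq> {}" using nonempty(2) by simp
          fix t assume "t \<in> (\<lambda>x. y \<bullet> x) ` Am" "\<And>v. v \<in> Am \<Longrightarrow> y \<bullet> v + r \<le> p"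
          then show "t \<le> p - r" by force
        qed
      qed
      define b where "b = - (p + q) / 2"
      have "r / 2 \<le> margin y b Ap Am"
        unfolding margin_def
      proof (intro min.boundedI)
        show "r / 2 \<le> Inf ((\<lambda>x. y \<bullet> x + b) ` Ap)"
        proof (rule cInf_greatest)
          show "(\<lambda>x. y \<bullet> x + b) ` Ap \<noteq> {}" using nonempty(1) by simp
          fix t assume "t \<in> (\<lambda>x. y \<bullet> x + b) ` Ap"
          then obtain u where u: "u \<in> Ap" and tu: "t = y \<bullet> u + b" by blast
          show "r / 2 \<le> t" using pl[OF u] pq tu unfolding b_def by (simp add: field_simps)
        qed
        show "r / 2 \<le> Inf ((\<lambda>x. - (y \<bullet> x) - b) ` Am)"
        proof (rule cInf_greatest)
          show "(\<lambda>x. - (y \<bullet> x) - b) ` Am \<noteq> {}" using nonempty(2) by simp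
          fix t assume "t \<in> (\<lambda>x. - (y \<bullet> x) - b) ` Am"
          then obtain u where u: "u \<in> Am" and tu: "t = - (y \<bullet> u) - b" by blast
          show "r / 2 \<le> t" using qu[OF u] pq tu unfolding b_def by (simp add: field_simps)
        qed
      qed
      also have "\<dots> \<le> dt" by (rule opt_max[OF yfeas])
      finally show "r \<le> 2 * dt" by simp
    qed
  qed
  have mt: "margin yt bt Ap Am \<ge> dt" using opt_val by simp
  have hp: "yt \<bullet> xp + bt \<ge> dt" using margin_hull(1)[OF compact mt] xp by simp
  have hm: "- (yt \<bullet> xm) - bt \<ge> dt" using margin_hull(2)[OF compact mt] xm by simp
  define K where "K = dual_norm N yt"
  have Nz: "N (xp - xm) = \<delta>" unfolding \<delta>_def z0e ..
  have ineq: "yt \<bullet> (xp - xm) \<le> \<delta> * K" unfolding K_def Nz[symmetric]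
    by (subst mult.commute, rule dual_ineq[OF norm])
  have Nnn: "\<delta> \<ge> 0" unfolding \<delta>_def using nrm_basic(3)[OF norm] .
  have "\<delta> * K \<le> \<delta>" using Nnn opt_feas unfolding K_def by (simp add: mult_left_le)
  have sum: "yt \<bullet> (xp - xm) = (yt \<bullet> xp + bt) + (- (yt \<bullet> xm) - bt)" by (simp add: inner_diff_right)
  have e1: "yt \<bullet> (xp - xm) = 2 * dt" "\<delta> = 2 * dt" "\<delta> * K = \<delta>"
    using key ineq \<open>\<delta> * K \<le> \<delta>\<close> hp hm sum by linarith+
  have K1: "K = 1" using e1 dt_pos by simp
  have part1: "yt \<bullet> (xp - xm) = N (xp - xm) * dual_norm N yt \<and>
            dt * dual_norm N yt = yt \<bullet> xp + bt \<and>
            dt * dual_norm N yt = - (yt \<bullet> xm) - bt \<and>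
            dt = N (xp - xm) / 2 \<and>
            bt = - (yt \<bullet> (xp + xm)) / 2"
    using e1 K1 hp hm sum Nz unfolding K_def by (simp add: inner_add_right)
  have part2: "yb \<bullet> vmax N yt \<ge> db / dt \<and> db / dt > 0"
    if sc: "strictly_convex_norm N" and mb: "margin yb bb Ap Am \<ge> db" and db: "db > 0" for yb bb db
  proof -
    define u where "u = (1 / (2 * dt)) *\<^sub>R (xp - xm)"
    have Nu: "N u = 1" unfolding u_def using nrm_basic(5)[OF norm] Nz e1 dt_pos by simp
    have yu: "yt \<bullet> u = 1" unfolding u_def using e1 dt_pos by simp
    have dual1: "yt \<bullet> z \<le> N z" for z using dual_ineq[OF norm, of yt z] K1 unfolding K_def by simp
    have "\<exists>w. N w \<le> 1 \<and> (\<forall>z. N z \<le> 1 \<longrightarrow> yt \<bullet> z \<le> yt \<bullet> w)"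
      using Nu yu dual1 by (intro exI[of _ u]) (auto intro: order_trans)
    from someI_ex[OF this] have v: "N (vmax N yt) \<le> 1" "\<And>z. N z \<le> 1 \<Longrightarrow> yt \<bullet> z \<le> yt \<bullet> vmax N yt"
      unfolding vmax_def by blast+
    define v where "v = vmax N yt"
    have yv: "yt \<bullet> v = 1" using v(2)[of u] Nu yu dual1[of v] v(1) unfolding v_def by linarith
    have Nv: "N v = 1" using yv dual1[of v] v(1) unfolding v_def by linarith
    have uv: "v = u"
    proof (rule ccontr)
      assume ne: "v \<noteq> u"
      have v0: "v \<noteq> 0" using Nv nrm_basic(1)[OF norm] by auto
      have u0: "u \<noteq> 0" using Nu nrm_basic(1)[OF norm] by auto
      have sc': "\<And>\<beta> w z. 0 < \<beta> \<Longrightarrow> \<beta> < 1 \<Longrightarrow> \<not> collinear {0, w, z} \<Longrightarrow>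
        N (\<beta> *\<^sub>R w + (1 - \<beta>) *\<^sub>R z) < \<beta> * N w + (1 - \<beta>) * N z"
        using sc unfolding strictly_convex_norm_def by blast
      show False
      proof (cases "collinear {0, v, u}")
        case True
        then obtain t where t: "u = t *\<^sub>R v" using v0 u0 collinear_lemma by blast
        have "\<bar>t\<bar> = 1" using Nu Nv t nrm_basic(5)[OF norm] by simp
        then have "t = 1 \<or> t = -1" by linarith
        then show False using ne t yu yv by auto
      next
        case False
        have "N ((1/2) *\<^sub>R v + (1 - 1/2) *\<^sub>R u) < (1/2) * N v + (1 - 1/2) * N u"
          using sc'[of "1/2" v u] False by simp
        then have "N ((1/2) *\<^sub>R v + (1/2) *\<^sub>R u) < 1" using Nu Nv by simp
        moreover have "yt \<bullet> ((1/2) *\<^sub>R v + (1/2) *\<^sub>R u) = 1" using yu yv by (simp add: inner_add_right)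
        ultimately show False using dual1[of "(1/2) *\<^sub>R v + (1/2) *\<^sub>R u"] by linarith
      qed
    qed
    have "yb \<bullet> xp + bb \<ge> db" using margin_hull(1)[OF compact mb] xp by simp
    moreover have "- (yb \<bullet> xm) - bb \<ge> db" using margin_hull(2)[OF compact mb] xm by simp
    ultimately have "yb \<bullet> (xp - xm) \<ge> 2 * db" by (simp add: inner_diff_right)
    then have le2: "(2 * db) / (2 * dt) \<le> yb \<bullet> (xp - xm) / (2 * dt)"
      using dt_pos by (intro divide_right_mono) auto
    have "yb \<bullet> u = yb \<bullet> (xp - xm) / (2 * dt)" unfolding u_def by simp
    with le2 have "yb \<bullet> u \<ge> db / dt" by simp
    then show ?thesis using uv db dt_pos unfolding v_def by simp
  qed
  show ?thesis using part1 part2 xp xm by blast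
qed

end
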